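(* Let $q=2^s$, $s\ge1$, and let $C_2\subseteq C_1\subseteq\mathbb F_q^n$ be $\mathbb F_q$-linear codes forming a $q$-ary CSS-$T$ pair. Then the binary code $\mathrm{tr}(C_2)\subseteq\mathbb F_2^n$ is self-orthogonal, i.e. $\mathrm{tr}(C_2)\subseteq\mathrm{tr}(C_2)^\perp$.
   Context: Let $q=2^s$ and $\mathrm{tr}:\mathbb F_q\to\mathbb F_2$, $\mathrm{tr}(x)=\sum_{i=0}^{s-1}x^{2^i}$, the absolute trace; for $c\in\mathbb F_q^n$, $\mathrm{tr}(c)=(\mathrm{tr}(c_1),\dots,\mathrm{tr}(c_n))$, and for a linear code $C$, $\mathrm{tr}(C)=\{\mathrm{tr}(c):c\in C\}\subseteq\mathbb F_2^n$. $^\perp$ is the dual for the standard inner product. Let $\mathcal H=\mathbb C^q$ with orthonormal basis $\{|x\rangle:x\in\mathbb F_q\}$ and $\mathcal H^{\otimes n}$ with basis $|x\rangle=|x_1\rangle\otimes\cdots\otimes|x_n\rangle$, $x\in\mathbb F_q^n$. For $\lambda\in\mathbb F_q$, $T^{(\lambda)}=\sum_{x\in\mathbb F_q}e^{i\pi\,\mathrm{tr}(\lambda x)/4}|x\rangle\langle x|$, where $\mathrm{tr}(\lambda x)\in\{0,1\}$ is regarded as an integer; $T=T^{(1)}$. For $\mathbb F_q$-linear codes $C_2\subseteq C_1\subseteq\mathbb F_q^n$, the CSS code $\mathrm{CSS}(C_1,C_2)\subseteq\mathcal H^{\otimes n}$ is the complex linear span of the states $|w+C_2\rangle=|C_2|^{-1/2}\sum_{c\in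 C_2}|w+c\rangle$ for $w\in C_1$. The pair $(C_1,C_2)$ is a $q$-ary CSS-$T$ pair if $(T^{(\lambda)})^{\otimes n}$ maps $\mathrm{CSS}(C_1,C_2)$ into itself for every $\lambda\in\mathbb F_q$. *)

theory Defs
  imports "HOL-Analysis.Analysis" "HOL-Library.Z2"
begin

text \<open>Finite field F_q, q = 2^s, is a type 'a :: {field, finite} with CARD('a) = 2^s.
  Vectors of length n are 'a^'n with 'n a finite index type of cardinality n.\<close>

text \<open>Absolute trace tr(x) = sum_{i<s} x^(2^i), computed in F_q (its values lie in {0,1}).\<close>
definition abs_trace :: "nat \<Rightarrow> 'a::field \<Rightarrow> 'a" where
  "abs_trace s x = (\<Sum>i<s. x ^ (2 ^ i))"

definition trace_int :: "nat \<Rightarrow> 'a::field \<Rightarrow> int" where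
  "trace_int s x = (if abs_trace s x = 0 then 0 else 1)"

definition trace_bit :: "nat \<Rightarrow> 'a::field \<Rightarrow> bit" where
  "trace_bit s x = (if abs_trace s x = 0 then 0 else 1)"

definition linear_code :: "('a::field ^ 'n) set \<Rightarrow> bool" where
  "linear_code C \<longleftrightarrow> 0 \<in> C \<and> (\<forall>x\<in>C. \<forall>y\<in>C. x + y \<in> C) \<and> (\<forall>c. \<forall>x\<in>C. c *s x \<in> C)"

definition trace_vec :: "nat \<Rightarrow> 'a::field ^ 'n \<Rightarrow> bit ^ 'n" where
  "trace_vec s c = (\<chi> i. trace_bit s (c $ i))"

definition trace_code :: "nat \<Rightarrow> ('a::field ^ 'n) set \<Rightarrow> (bit ^ 'n) set" where
  "trace_code s C = trace_vec s ` C"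

definition dual_code :: "('b::comm_ring_1 ^ 'n::finite) set \<Rightarrow> ('b ^ 'n) set" where
  "dual_code C = {v. \<forall>c\<in>C. (\<Sum>i\<in>UNIV. v $ i * c $ i) = 0}"

text \<open>States of H^{\<otimes>n}: functions F_q^n \<Rightarrow> complex (coefficients in the basis |x>).
  Coset state |w + C2> = |C2|^{-1/2} \<Sum>_{c\<in>C2} |w + c>.\<close>
definition coset_state :: "('a::field ^ 'n) set \<Rightarrow> 'a ^ 'n \<Rightarrow> ('a ^ 'n \<Rightarrow> complex)" where
  "coset_state C2 w = (\<lambda>x. \<Sum>c\<in>C2. (if x = w + c then 1 / sqrt (real (card C2)) else 0))"

text \<open>CSS(C1,C2): complex linear span of the coset states |w + C2>, w \<in> C1
  (C1 finite, so the span is the set of all linear combinations indexed by C1).\<close>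
definition css_code :: "('a::{field,finite} ^ 'n::finite) set \<Rightarrow> ('a ^ 'n) set \<Rightarrow> ('a ^ 'n \<Rightarrow> complex) set" where
  "css_code C1 C2 = {\<psi>. \<exists>a :: 'a ^ 'n \<Rightarrow> complex. \<psi> = (\<lambda>x. \<Sum>w\<in>C1. a w * coset_state C2 w x)}"

definition T_tensor :: "nat \<Rightarrow> 'a::field \<Rightarrow> ('a ^ 'n::finite \<Rightarrow> complex) \<Rightarrow> ('a ^ 'n \<Rightarrow> complex)" where
  "T_tensor s lam \<psi> = (\<lambda>x. (\<Prod>i\<in>UNIV. exp (\<i> * of_real pi * of_int (trace_int s (lam * x $ i)) / 4)) * \<psi> x)"

definition css_T_pair :: "nat \<Rightarrow> ('a::{field,finite} ^ 'n::finite) set \<Rightarrow> ('a ^ 'n) set \<Rightarrow> bool" where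
  "css_T_pair s C1 C2 \<longleftrightarrow> (\<forall>lam. \<forall>\<psi>\<in>css_code C1 C2. T_tensor s lam \<psi> \<in> css_code C1 C2)"

end

theory Submission
  imports Defs
begin

lemma card_of_nat_zero: "of_nat CARD('a) = (0::'a::{field,finite})"
proof -
  have "(\<Sum>x\<in>UNIV. x) = (\<Sum>x\<in>UNIV. x + (1::'a))"
    by (rule sum.reindex_bij_witness[of _ "\<lambda>x. x + 1" "\<lambda>x. x - 1"]) auto
  also have "\<dots> = (\<Sum>x\<in>UNIV. x) + of_nat CARD('a)" by (simp add: sum.distrib)
  finally show ?thesis by simp
qed

lemma two_zero:
  assumes "CARD('a) = 2 ^ s" "s \<ge> 1"
  shows "(2::'a::{field,finite}) = 0"
proof -
  have "(2::'a) ^ s = 0" using card_of_nat_zero[where 'a='a] assms by simp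
  thus ?thesis by simp
qed

lemma fermat_fin: "x ^ CARD('a) = (x::'a::{field,finite})"
proof (cases "x = 0")
  case True thus ?thesis by simp
next
  case False
  let ?S = "UNIV - {0::'a}"
  have "(\<Prod>y\<in>?S. x * y) = (\<Prod>y\<in>?S. y)"
    by (rule prod.reindex_bij_witness[of _ "\<lambda>y. y / x" "\<lambda>y. x * y"]) (use False in auto)
  hence "x ^ card ?S * (\<Prod>y\<in>?S. y) = 1 * (\<Prod>y\<in>?S. y)" by (simp add: prod.distrib)
  moreover have "(\<Prod>y\<in>?S. y) \<noteq> 0" by simp
  ultimately have "x ^ card ?S = 1" by (metis mult_right_cancel)
  moreover have "card ?S = CARD('a) - 1" by (simp add: card_Diff_singleton)
  moreover have "CARD('a) = Suc (CARD('a) - 1)" using finite_UNIV_card_ge_0[where 'a='a] by simp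
  ultimately show ?thesis by (metis power_Suc mult_1_right)
qed


lemma frob2: "(2::'a::field) = 0 \<Longrightarrow> (x + y) ^ 2 = x ^ 2 + (y::'a) ^ 2"
  by (simp add: power2_sum)

lemma frob: "(2::'a::field) = 0 \<Longrightarrow> (x + y) ^ (2 ^ i) = x ^ (2 ^ i) + (y::'a) ^ (2 ^ i)"
proof (induction i)
  case 0 thus ?case by simp
next
  case (Suc i)
  have "(x + y) ^ (2 ^ Suc i) = ((x + y) ^ (2 ^ i)) ^ 2" by (metis power_Suc2 power_mult)
  also have "\<dots> = (x ^ (2 ^ i)) ^ 2 + (y ^ (2 ^ i)) ^ 2" using Suc by (simp add: frob2)
  also have "\<dots> = x ^ (2 ^ Suc i) + y ^ (2 ^ Suc i)" by (metis power_Suc2 power_mult)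
  finally show ?case .
qed

lemma frob_sum: "(2::'a::field) = 0 \<Longrightarrow> (\<Sum>i<(n::nat). f i) ^ 2 = (\<Sum>i<n. (f i :: 'a) ^ 2)"
  by (induction n) (simp_all add: frob2)

lemma trace_add: "(2::'a::field) = 0 \<Longrightarrow> abs_trace s (x + y) = abs_trace s x + abs_trace s (y::'a)"
  unfolding abs_trace_def by (simp add: frob sum.distrib)

lemma trace_01:
  assumes "CARD('a) = 2 ^ s" "s \<ge> 1"
  shows "abs_trace s (x::'a::{field,finite}) = 0 \<or> abs_trace s x = 1"
proof -
  have two: "(2::'a) = 0" using two_zero assms by blast
  let ?f = "\<lambda>i. x ^ (2 ^ i)"
  have sq: "(?f i) ^ 2 = ?f (Suc i)" for i
    by (metis power_Suc2 power_mult)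
  have "abs_trace s x ^ 2 = (\<Sum>i<s. ?f (Suc i))"
    unfolding abs_trace_def using two
    by (simp only: frob_sum sq)
  also have "?f 0 + (\<Sum>i<s. ?f (Suc i)) = (\<Sum>i<s. ?f i) + ?f s"
    using sum.lessThan_Suc_shift[of ?f s] sum.lessThan_Suc[of ?f s] by (simp only:)
  hence "(\<Sum>i<s. ?f (Suc i)) = (\<Sum>i<s. ?f i)"
    using fermat_fin[of x] assms(1) by (simp only: power_0) (metis add_right_cancel power_one_right add.commute)
  finally have "abs_trace s x ^ 2 = abs_trace s x" unfolding abs_trace_def .
  hence "abs_trace s x * (abs_trace s x - 1) = 0" by (simp add: power2_eq_square algebra_simps)
  thus ?thesis by simp
qed


lemma trace_int_add:
  assumes "CARD('a) = 2 ^ s" "s \<ge> 1"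
  shows "trace_int s (x + y) = trace_int s x + trace_int s y - 2 * trace_int s x * trace_int s (y::'a::{field,finite})"
proof -
  have two: "(2::'a) = 0" using two_zero assms by blast
  hence "(1::'a) + 1 = 0" by (metis one_add_one)
  moreover have "abs_trace s (x + y) = abs_trace s x + abs_trace s y" using trace_add two by blast
  moreover note trace_01[OF assms, of x] trace_01[OF assms, of y]
  ultimately show ?thesis unfolding trace_int_def by auto
qed

lemma trace_int_01: "trace_int s x = 0 \<or> trace_int s x = 1"
  unfolding trace_int_def by auto

lemma trace_bit_int: "trace_bit s x = of_int (trace_int s x)"
  unfolding trace_bit_def trace_int_def by auto

lemma lin_neg: "linear_code C \<Longrightarrow> c \<in> C \<Longrightarrow> - c \<in> C"
proof -
  assume "linear_code C" "c \<in> C"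
  hence "(-1) *s c \<in> C" unfolding linear_code_def by blast
  moreover have "(-1) *s c = - c" by (simp add: vec_eq_iff)
  ultimately show ?thesis by simp
qed

lemma coset_state_eq:
  assumes "finite C2" shows "coset_state C2 w x = (if x - w \<in> C2 then 1 / sqrt (real (card C2)) else 0)"
proof -
  have "coset_state C2 w x = (\<Sum>c\<in>C2. if c = x - w then complex_of_real (1 / sqrt (real (card C2))) else 0)"
    unfolding coset_state_def of_real_sum by (rule sum.cong) (auto simp: algebra_simps)
  also have "\<dots> = (if x - w \<in> C2 then complex_of_real (1 / sqrt (real (card C2))) else 0)"
    by (rule sum.delta[OF assms])
  finally show ?thesis by simp
qed

lemma css_inv:
  assumes "linear_code C2" "\<psi> \<in> css_code C1 C2" "c \<in> C2"
  shows "\<psi> (x + c) = \<psi> x"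
proof -
  have "(x + c - w \<in> C2) = (x - w \<in> C2)" for w
  proof
    assume "x + c - w \<in> C2"
    hence "(x + c - w) + (- c) \<in> C2" using assms lin_neg unfolding linear_code_def by blast
    thus "x - w \<in> C2" by (simp add: algebra_simps)
  next
    assume "x - w \<in> C2"
    hence "(x - w) + c \<in> C2" using assms unfolding linear_code_def by blast
    thus "x + c - w \<in> C2" by (simp add: algebra_simps)
  qed
  thus ?thesis using assms(2) unfolding css_code_def by (auto simp: coset_state_eq[OF finite])
qed


lemma wt8:
  fixes C1 C2 :: "('a::{field,finite} ^ 'n::finite) set"
  assumes "linear_code C1" and "linear_code C2" and "C2 \<subseteq> C1"
    and "css_T_pair s C1 C2" and "c \<in> C2"
  shows "8 dvd (\<Sum>i\<in>UNIV. trace_int s (c $ i))"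
proof -
  define \<psi> where "\<psi> = coset_state C2 0"
  define k where "k = complex_of_real (1 / sqrt (real (card C2)))"
  have z1: "0 \<in> C1" "0 \<in> C2" using assms unfolding linear_code_def by auto
  have "card C2 > 0" using z1 by (auto simp add: card_gt_0_iff)
  hence kn: "k \<noteq> 0" unfolding k_def by auto
  have psi: "\<psi> x = (if x \<in> C2 then k else 0)" for x
    unfolding \<psi>_def k_def by (simp add: coset_state_eq)
  have "\<psi> \<in> css_code C1 C2"
    unfolding css_code_def
  proof (intro CollectI exI[of _ "\<lambda>w. if w = 0 then 1 else 0"] ext)
    fix x
    have "(\<Sum>w\<in>C1. (if w = 0 then 1 else 0) * coset_state C2 w x)
        = (\<Sum>w\<in>C1. if w = 0 then coset_state C2 w x else 0)"
      by (rule sum.cong) auto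
    also have "\<dots> = coset_state C2 0 x" using z1 by (simp add: sum.delta)
    finally show "\<psi> x = (\<Sum>w\<in>C1. (if w = 0 then 1 else 0) * coset_state C2 w x)"
      unfolding \<psi>_def by simp
  qed
  hence T: "T_tensor s 1 \<psi> \<in> css_code C1 C2" using assms(4) unfolding css_T_pair_def by blast
  have "T_tensor s 1 \<psi> (0 + c) = T_tensor s 1 \<psi> 0"
    by (rule css_inv[OF assms(2) T assms(5)])
  moreover have "trace_int s (0::'a) = 0" unfolding trace_int_def abs_trace_def by (simp add: power_0_left)
  ultimately have "(\<Prod>i\<in>UNIV. exp (\<i> * of_real pi * of_int (trace_int s (c $ i)) / 4)) * k = k"
    unfolding T_tensor_def using psi z1 assms(5) by simp
  hence P: "(\<Prod>i\<in>UNIV. exp (\<i> * of_real pi * of_int (trace_int s (c $ i)) / 4)) = 1"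
    using kn by simp
  define W where "W = (\<Sum>i\<in>UNIV. trace_int s (c $ i))"
  have "(\<Prod>i\<in>UNIV. exp (\<i> * of_real pi * of_int (trace_int s (c $ i)) / 4))
      = exp (\<Sum>i\<in>UNIV. \<i> * of_real pi * of_int (trace_int s (c $ i)) / 4)"
    by (simp add: exp_sum)
  also have "(\<Sum>i\<in>UNIV. \<i> * of_real pi * of_int (trace_int s (c $ i)) / 4)
      = \<i> * of_real pi * of_int W / 4"
    unfolding W_def by (simp add: sum_divide_distrib[symmetric] sum_distrib_left)
  finally have "exp (\<i> * of_real pi * of_int W / 4) = 1" using P by simp
  then obtain m :: int where "Im (\<i> * of_real pi * of_int W / 4) = of_int (2 * m) * pi"
    unfolding exp_eq_1 by blast
  hence "pi * W / 4 = 2 * m * pi" by simp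
  hence "W = 8 * m" by (simp add: field_simps)
  thus ?thesis unfolding W_def by simp
qed


theorem mainTheorem6:
  fixes C1 C2 :: "('a::{field,finite} ^ 'n::finite) set" and s :: nat
  assumes "s \<ge> 1" and "CARD('a) = 2 ^ s"
    and "linear_code C1" and "linear_code C2" and "C2 \<subseteq> C1"
    and "css_T_pair s C1 C2"
  shows "trace_code s C2 \<subseteq> dual_code (trace_code s C2)"
proof
  fix v assume "v \<in> trace_code s C2"
  then obtain c where c: "c \<in> C2" "v = trace_vec s c" unfolding trace_code_def by blast
  show "v \<in> dual_code (trace_code s C2)"
    unfolding dual_code_def
  proof (intro CollectI ballI)
    fix u assume "u \<in> trace_code s C2"
    then obtain c' where c': "c' \<in> C2" "u = trace_vec s c'" unfolding trace_code_def by blast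
    have cc: "c + c' \<in> C2" using c c' assms(4) unfolding linear_code_def by blast
    define A where "A = (\<Sum>i\<in>UNIV. trace_int s (c $ i))"
    define B where "B = (\<Sum>i\<in>UNIV. trace_int s (c' $ i))"
    define D where "D = (\<Sum>i\<in>UNIV. trace_int s ((c + c') $ i))"
    define S where "S = (\<Sum>i\<in>UNIV. trace_int s (c $ i) * trace_int s (c' $ i))"
    have "8 dvd A" "8 dvd B" "8 dvd D" unfolding A_def B_def D_def
      using wt8[OF assms(3,4,5,6) c(1)] wt8[OF assms(3,4,5,6) c'(1)] wt8[OF assms(3,4,5,6) cc] by simp_all
    moreover have "D = A + B - 2 * S"
      unfolding A_def B_def D_def S_def
      using trace_int_add[OF assms(2,1)]
      by (simp add: sum.distrib sum_subtractf sum_distrib_left mult.assoc)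
    ultimately have "8 dvd 2 * S" by (metis dvd_add dvd_diff add_diff_cancel_left' diff_diff_eq2 add.commute)
    then obtain t where "2 * S = 8 * t" by blast
    hence St: "S = 2 * (2 * t)" by simp
    have "(\<Sum>i\<in>UNIV. v $ i * u $ i) = of_int S"
      unfolding S_def c c' trace_vec_def by (simp add: trace_bit_int)
    also have "\<dots> = 0" unfolding St by simp
    finally show "(\<Sum>i\<in>UNIV. v $ i * u $ i) = 0" .
  qed
qed

end
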